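(* Let $N=2$, $J=1$, $h_0=[0,1]^{\sf T}$, $h_1=[\cos\tau,\sin\tau]^{\sf T}$ with $\tau\in(-\pi/2,\pi/2)$, $\sigma_0^2,\sigma_1^2,\sigma_n^2>0$, and $c_1\in[-\sigma_0\sigma_1,\sigma_0\sigma_1]$. Then for every $\lambda\ge0$, \[ w_{\rm RZF}(\lambda)=\begin{bmatrix}-\dfrac{\cos\tau\,[(\sigma_1^2+\lambda)\sin\tau+c_1]}{(\sigma_1^2+\lambda)\cos^2\tau+\sigma_n^2}\\[2mm] 1\end{bmatrix}, \] and \[ \mathrm{MSE}(\lambda)=\frac{\delta^2(\sigma_1^2\cos^2\tau+\sigma_n^2)}{g(\lambda)^2}-\frac{2\sigma_n^2\delta\tan\tau}{g(\lambda)}+\sigma_n^2(\tan^2\tau+1), \] where $\delta:=\sigma_n^2\tan\tau-c_1\cos\tau$ and $g(\lambda):=\lambda\cos^2\tau+\sigma_1^2\cos^2\tau+\sigma_n^2>0$. Furthermore: (i) if $\delta=0$, then $\mathrm{MSE}(\lambda)=\sigma_n^2(\tan^2\tau+1)$ for all $\lambda\ge0$; (ii) if $\delta\neq0$ and $\gamma:=\sigma_n^2\tan\tau/\delta\le0$, then $\mathrm{MSE}(\lambda)$ is decreasing on $[0,\infty)$ and $\inf_{\lambda\ge0}\mathrm{MSE}(\lambda)=\lim_{\lambda\to\infty}\mathrm{MSE}(\lambda)$ (the zero-forcing limit); (iii) if $\delta\ne0$ and $\gamma>0$, then $\mathrm{MSE}$ is minimized over $[0,\infty)$ by $\lambda=-\dfrac{c_1(\sigma_1^2\cos^2\tau+\sigma_n^2)}{\sigma_n^2\sin\tau}>0$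 when $\gamma\in(0,1)$, and by $\lambda=0$ when $\gamma\ge1$.
   Context: Real-valued single-interference model: $y(k)=s_0(k)h_0+s_1(k)h_1+n(k)\in\mathbb{R}^N$, with real zero-mean jointly weakly stationary signals $s_0,s_1$, $\sigma_j^2:=E[s_j(k)^2]$, $c_1:=E[s_0(k)s_1(k)]$, and real zero-mean noise $n(k)\sim\mathcal{N}(0,\sigma_n^2I)$ uncorrelated with the signals. $R:=E[y(k)y(k)^{\sf T}]$. For $\lambda\ge0$, $R_\lambda:=R+\lambda h_1h_1^{\sf T}$ and the RZF beamformer is $w_{\rm RZF}(\lambda):=R_\lambda^{-1}h_0/(h_0^{\sf T}R_\lambda^{-1}h_0)$. The MSE of a beamformer $w$ is $J_{\rm MSE}(w):=E[(w^{\sf T}y(k)-s_0(k))^2]$, and $\mathrm{MSE}(\lambda):=J_{\rm MSE}(w_{\rm RZF}(\lambda))$. *)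

theory Defs
  imports "HOL-Analysis.Analysis"
begin

definition outer :: "real^'n \<Rightarrow> real^'n \<Rightarrow> real^'n^'n" where
  "outer a b = (\<chi> i j. a$i * b$j)"

text \<open>Covariance R = E[y y^T] of y = s0 h0 + s1 h1 + n, expressed through the
  second moments: E[s0^2] = sigma0^2, E[s1^2] = sigma1^2, E[s0 s1] = c1,
  E[n n^T] = sigman^2 I, noise uncorrelated with signals.\<close>
definition cov_R :: "real \<Rightarrow> real \<Rightarrow> real \<Rightarrow> real \<Rightarrow> real^'n \<Rightarrow> real^'n \<Rightarrow> real^'n^'n" where
  "cov_R \<sigma>0 \<sigma>1 \<sigma>n c1 h0 h1 =
     \<sigma>0\<^sup>2 *\<^sub>R outer h0 h0 + \<sigma>1\<^sup>2 *\<^sub>R outer h1 h1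
     + c1 *\<^sub>R (outer h0 h1 + outer h1 h0) + \<sigma>n\<^sup>2 *\<^sub>R mat 1"

definition w_RZF :: "real^'n^'n \<Rightarrow> real^'n \<Rightarrow> real^'n \<Rightarrow> real \<Rightarrow> real^'n" where
  "w_RZF R h0 h1 l =
     (let Rl = R + l *\<^sub>R outer h1 h1
      in (1 / (h0 \<bullet> (matrix_inv Rl *v h0))) *\<^sub>R (matrix_inv Rl *v h0))"

text \<open>J_MSE(w) = E[(w^T y - s0)^2] = w^T R w - 2 w^T E[y s0] + E[s0^2],
  with E[y s0] = sigma0^2 h0 + c1 h1.\<close>
definition J_MSE :: "real \<Rightarrow> real \<Rightarrow> real \<Rightarrow> real \<Rightarrow> real^'n \<Rightarrow> real^'n \<Rightarrow> real^'n \<Rightarrow> real" where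
  "J_MSE \<sigma>0 \<sigma>1 \<sigma>n c1 h0 h1 w =
     w \<bullet> (cov_R \<sigma>0 \<sigma>1 \<sigma>n c1 h0 h1 *v w) - 2 * (w \<bullet> (\<sigma>0\<^sup>2 *\<^sub>R h0 + c1 *\<^sub>R h1)) + \<sigma>0\<^sup>2"

definition MSE_RZF :: "real \<Rightarrow> real \<Rightarrow> real \<Rightarrow> real \<Rightarrow> real^'n \<Rightarrow> real^'n \<Rightarrow> real \<Rightarrow> real" where
  "MSE_RZF \<sigma>0 \<sigma>1 \<sigma>n c1 h0 h1 l =
     J_MSE \<sigma>0 \<sigma>1 \<sigma>n c1 h0 h1 (w_RZF (cov_R \<sigma>0 \<sigma>1 \<sigma>n c1 h0 h1) h0 h1 l)"

end

theory Submission imports Defs begin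

lemma matrix_inv_right': "invertible A \<Longrightarrow> A ** matrix_inv A = mat 1"
  unfolding invertible_def matrix_inv_def by (rule someI_ex[THEN conjunct1])

lemma w_form:
  fixes C S p0 p1 q c1 l :: real
  assumes CS: "C\<^sup>2 + S\<^sup>2 = 1" and q: "q > 0" and p0: "p0 > 0" and p1: "p1 > 0"
    and c1: "-(p0 * p1) \<le> c1" "c1 \<le> p0 * p1" and l: "l \<ge> 0"
  shows "w_RZF (cov_R p0 p1 q c1 (vector [0,1]) (vector [C,S])) (vector [0,1]) (vector [C,S]) l =
        (vector [- (C * ((p1\<^sup>2 + l) * S + c1)) / ((p1\<^sup>2 + l) * C\<^sup>2 + q\<^sup>2), 1] :: real^2)"
proof -
  define h0 :: "real^2" where "h0 = vector [0,1]"
  define h1 :: "real^2" where "h1 = vector [C,S]"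
  define Rl where "Rl = cov_R p0 p1 q c1 h0 h1 + l *\<^sub>R outer h1 h1"
  define A where "A = p1\<^sup>2 + l"
  have e11: "Rl$1$1 = A*C\<^sup>2 + q\<^sup>2"
    by (simp add: Rl_def cov_R_def outer_def h0_def h1_def A_def mat_def power2_eq_square algebra_simps)
  have e12: "Rl$1$2 = A*C*S + c1*C"
    by (simp add: Rl_def cov_R_def outer_def h0_def h1_def A_def mat_def power2_eq_square algebra_simps)
  have e21: "Rl$2$1 = A*C*S + c1*C"
    by (simp add: Rl_def cov_R_def outer_def h0_def h1_def A_def mat_def power2_eq_square algebra_simps)
  have e22: "Rl$2$2 = p0\<^sup>2 + A*S\<^sup>2 + 2*c1*S + q\<^sup>2"
    by (simp add: Rl_def cov_R_def outer_def h0_def h1_def A_def mat_def power2_eq_square algebra_simps)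
  have g: "A*C\<^sup>2 + q\<^sup>2 > 0" unfolding A_def using q l
    by (simp add: add_nonneg_pos)
  have detf: "det Rl = C\<^sup>2*(A*p0\<^sup>2 - c1\<^sup>2) + q\<^sup>2*(A*(C\<^sup>2+S\<^sup>2) + p0\<^sup>2 + 2*c1*S) + q\<^sup>2*q\<^sup>2"
    unfolding det_2 e11 e12 e21 e22 by (simp add: algebra_simps power2_eq_square)
  have "c1\<^sup>2 \<le> (p0*p1)\<^sup>2" proof -
    have "\<bar>c1\<bar> \<le> \<bar>p0*p1\<bar>" using c1 p0 p1 by auto
    thus ?thesis by (simp only: abs_le_square_iff)
  qed
  also have "\<dots> \<le> p0\<^sup>2 * A" unfolding A_def using l by (simp add: power_mult_distrib algebra_simps)
  finally have t1: "C\<^sup>2*(A*p0\<^sup>2 - c1\<^sup>2) \<ge> 0" by (intro mult_nonneg_nonneg) (auto simp: mult.commute)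
  have "S\<^sup>2 \<le> 1" using CS by (metis le_add_same_cancel2 zero_le_power2)
  hence "\<bar>S\<bar> \<le> 1" by (simp add: abs_square_le_1)
  hence "\<bar>c1*S\<bar> \<le> p0*p1" using c1 by (simp add: abs_mult) (smt (verit) mult_left_le mult_nonneg_nonneg p0 p1 abs_ge_zero)
  moreover have "p0\<^sup>2 + p1\<^sup>2 - 2*p0*p1 \<ge> 0" by (smt (verit) power2_diff zero_le_power2)
  ultimately have "A*(C\<^sup>2+S\<^sup>2) + p0\<^sup>2 + 2*c1*S \<ge> 0" unfolding CS A_def using l by (simp add: abs_le_iff)
  hence "det Rl > 0" unfolding detf using t1 q
    by (smt (verit) mult_nonneg_nonneg mult_pos_pos zero_less_power2 zero_le_power2)
  hence inv: "invertible Rl" by (simp add: invertible_det_nz)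
  define u where "u = matrix_inv Rl *v h0"
  have "Rl *v u = h0" unfolding u_def matrix_vector_mul_assoc matrix_inv_right'[OF inv] by simp
  hence eq1: "Rl$1$1 * u$1 + Rl$1$2 * u$2 = 0" and eq2: "Rl$2$1 * u$1 + Rl$2$2 * u$2 = 1"
    by (auto simp: vec_eq_iff forall_2 matrix_vector_mult_def sum_2 h0_def)
  have u2: "u$2 \<noteq> 0"
  proof
    assume "u$2 = 0"
    with eq1 e11 g have "u$1 = 0" by simp
    with eq2 \<open>u$2 = 0\<close> show False by simp
  qed
  have hu: "h0 \<bullet> u = u$2" by (simp add: inner_vec_def sum_2 h0_def)
  have u1: "u$1 = - (A*C*S + c1*C) * u$2 / (A*C\<^sup>2 + q\<^sup>2)"
    using eq1 g unfolding e11 e12 by (simp add: field_simps)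
  show ?thesis
    unfolding w_RZF_def Let_def h0_def[symmetric] h1_def[symmetric] Rl_def[symmetric] u_def[symmetric] hu
    using u2 g by (simp add: vec_eq_iff forall_2 u1 A_def field_simps)
qed

lemma J_form:
  fixes C S p0 p1 q c1 x :: real
  shows "J_MSE p0 p1 q c1 (vector [0,1]) (vector [C,S]) (vector [x,1] :: real^2)
     = p1\<^sup>2 * (x*C+S)\<^sup>2 + q\<^sup>2*(x\<^sup>2+1)"
  by (simp add: J_MSE_def cov_R_def outer_def mat_def inner_vec_def sum_2 matrix_vector_mult_def
      power2_eq_square algebra_simps)

lemma quad_mono:
  fixes d G0 \<gamma> ta tb :: real
  assumes "d \<noteq> 0" "G0 > 0" "\<gamma> \<le> 0" "0 < tb" "tb < ta"
  shows "d\<^sup>2*G0*tb\<^sup>2 - 2*\<gamma>*d\<^sup>2*tb < d\<^sup>2*G0*ta\<^sup>2 - 2*\<gamma>*d\<^sup>2*ta"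
proof -
  have e: "(d\<^sup>2*G0*ta\<^sup>2 - 2*\<gamma>*d\<^sup>2*ta) - (d\<^sup>2*G0*tb\<^sup>2 - 2*\<gamma>*d\<^sup>2*tb)
      = d\<^sup>2*((ta-tb)*(G0*(ta+tb) - 2*\<gamma>))" by (simp add: algebra_simps power2_eq_square)
  have d: "d\<^sup>2 > 0" using assms by simp
  have h: "G0*(ta+tb) > 0" using assms by simp
  have "(ta-tb)*(G0*(ta+tb) - 2*\<gamma>) > 0" apply (rule mult_pos_pos) using assms h by linarith+
  with e d show ?thesis by (smt (verit) mult_pos_pos)
qed

lemma quad_min:
  fixes d G0 \<gamma> t :: real
  assumes "G0 > 0"
  shows "d\<^sup>2*G0*(\<gamma>/G0)\<^sup>2 - 2*\<gamma>*d\<^sup>2*(\<gamma>/G0) \<le> d\<^sup>2*G0*t\<^sup>2 - 2*\<gamma>*d\<^sup>2*t"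
proof -
  have "(d\<^sup>2*G0*t\<^sup>2 - 2*\<gamma>*d\<^sup>2*t) - (d\<^sup>2*G0*(\<gamma>/G0)\<^sup>2 - 2*\<gamma>*d\<^sup>2*(\<gamma>/G0))
     = d\<^sup>2*G0*(t - \<gamma>/G0)\<^sup>2" using assms by (simp add: field_simps power2_eq_square)
  moreover have "d\<^sup>2*G0*(t - \<gamma>/G0)\<^sup>2 \<ge> 0" using assms by simp
  ultimately show ?thesis by linarith
qed

lemma quad_end:
  fixes d G0 \<gamma> t :: real
  assumes "G0 > 0" "1 \<le> \<gamma>" "0 < t" "t \<le> 1/G0"
  shows "d\<^sup>2*G0*(1/G0)\<^sup>2 - 2*\<gamma>*d\<^sup>2*(1/G0) \<le> d\<^sup>2*G0*t\<^sup>2 - 2*\<gamma>*d\<^sup>2*t"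
proof -
  have e: "(d\<^sup>2*G0*t\<^sup>2 - 2*\<gamma>*d\<^sup>2*t) - (d\<^sup>2*G0*(1/G0)\<^sup>2 - 2*\<gamma>*d\<^sup>2*(1/G0))
      = d\<^sup>2*((t-1/G0)*(G0*(t+1/G0) - 2*\<gamma>))" using assms by (simp add: field_simps power2_eq_square)
  have a: "G0*t \<le> 1" using assms by (simp add: field_simps)
  have b: "G0*(t+1/G0) = G0*t + 1" using assms by (simp add: field_simps)
  have c: "G0*(t+1/G0) - 2*\<gamma> \<le> 0" using assms a b by linarith
  have "(t-1/G0)*(G0*(t+1/G0) - 2*\<gamma>) \<ge> 0" apply (rule mult_nonpos_nonpos) using assms c by auto
  with e show ?thesis by (smt (verit) zero_le_power2 mult_nonneg_nonneg)
qed

lemma quad_low: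
  fixes d G0 \<gamma> t :: real
  assumes "G0 > 0" "\<gamma> \<le> 0" "0 < t"
  shows "0 \<le> d\<^sup>2*G0*t\<^sup>2 - 2*\<gamma>*d\<^sup>2*t"
proof -
  have e: "d\<^sup>2*G0*t\<^sup>2 - 2*\<gamma>*d\<^sup>2*t = d\<^sup>2*(t*(G0*t - 2*\<gamma>))" by (simp add: algebra_simps power2_eq_square)
  have h: "G0*t > 0" using assms by simp
  have "t*(G0*t - 2*\<gamma>) \<ge> 0" apply (rule mult_nonneg_nonneg) using assms h by linarith+
  with e show ?thesis by simp
qed

theorem lemma2:
  fixes \<tau> \<sigma>0 \<sigma>1 \<sigma>n c1 :: real
    and h0 h1 :: "real^2"
    and MSE g :: "real \<Rightarrow> real"
    and \<delta> \<gamma> :: real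
  assumes h0_def: "h0 = vector [0, 1]"
    and h1_def: "h1 = vector [cos \<tau>, sin \<tau>]"
    and MSE_def: "MSE = MSE_RZF \<sigma>0 \<sigma>1 \<sigma>n c1 h0 h1"
    and \<delta>_def: "\<delta> = \<sigma>n\<^sup>2 * tan \<tau> - c1 * cos \<tau>"
    and g_def: "g = (\<lambda>l. l * (cos \<tau>)\<^sup>2 + \<sigma>1\<^sup>2 * (cos \<tau>)\<^sup>2 + \<sigma>n\<^sup>2)"
    and \<gamma>_def: "\<gamma> = \<sigma>n\<^sup>2 * tan \<tau> / \<delta>"
    and tau: "-(pi/2) < \<tau>" "\<tau> < pi/2"
    and pos: "\<sigma>0 > 0" "\<sigma>1 > 0" "\<sigma>n > 0"
    and c1: "-(\<sigma>0 * \<sigma>1) \<le> c1" "c1 \<le> \<sigma>0 * \<sigma>1"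
  shows
    "(\<forall>l\<ge>0. w_RZF (cov_R \<sigma>0 \<sigma>1 \<sigma>n c1 h0 h1) h0 h1 l =
        vector [- (cos \<tau> * ((\<sigma>1\<^sup>2 + l) * sin \<tau> + c1))
                  / ((\<sigma>1\<^sup>2 + l) * (cos \<tau>)\<^sup>2 + \<sigma>n\<^sup>2), 1])
   \<and> (\<forall>l\<ge>0. g l > 0 \<and>
        MSE l = \<delta>\<^sup>2 * (\<sigma>1\<^sup>2 * (cos \<tau>)\<^sup>2 + \<sigma>n\<^sup>2) / (g l)\<^sup>2
                - 2 * \<sigma>n\<^sup>2 * \<delta> * tan \<tau> / g l + \<sigma>n\<^sup>2 * ((tan \<tau>)\<^sup>2 + 1))
   \<and> (\<delta> = 0 \<longrightarrow> (\<forall>l\<ge>0. MSE l = \<sigma>n\<^sup>2 * ((tan \<tau>)\<^sup>2 + 1)))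
   \<and> (\<delta> \<noteq> 0 \<and> \<gamma> \<le> 0 \<longrightarrow>
        (\<forall>a b. 0 \<le> a \<and> a < b \<longrightarrow> MSE b < MSE a)
        \<and> (\<exists>L. (MSE \<longlongrightarrow> L) at_top \<and> (INF l\<in>{0..}. MSE l) = L))
   \<and> (\<delta> \<noteq> 0 \<and> 0 < \<gamma> \<and> \<gamma> < 1 \<longrightarrow>
        (let ls = - (c1 * (\<sigma>1\<^sup>2 * (cos \<tau>)\<^sup>2 + \<sigma>n\<^sup>2)) / (\<sigma>n\<^sup>2 * sin \<tau>)
         in ls > 0 \<and> (\<forall>l\<ge>0. MSE ls \<le> MSE l)))
   \<and> (\<delta> \<noteq> 0 \<and> 1 \<le> \<gamma> \<longrightarrow> (\<forall>l\<ge>0. MSE 0 \<le> MSE l))"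
proof -
  define C where "C = cos \<tau>"
  define S where "S = sin \<tau>"
  define T where "T = tan \<tau>"
  have Cpos: "C > 0" unfolding C_def using tau by (intro cos_gt_zero_pi) auto
  have CS: "C\<^sup>2 + S\<^sup>2 = 1" unfolding C_def S_def by (simp add: add.commute)
  have TSC: "T = S / C" unfolding T_def S_def C_def by (simp add: tan_def)
  have W: "\<forall>l\<ge>0. w_RZF (cov_R \<sigma>0 \<sigma>1 \<sigma>n c1 h0 h1) h0 h1 l =
        vector [- (cos \<tau> * ((\<sigma>1\<^sup>2 + l) * sin \<tau> + c1))
                  / ((\<sigma>1\<^sup>2 + l) * (cos \<tau>)\<^sup>2 + \<sigma>n\<^sup>2), 1]"
    using w_form[OF CS pos(3) pos(1) pos(2) c1] unfolding h0_def h1_def C_def S_def by blast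
  define G0 where "G0 = \<sigma>1\<^sup>2 * C\<^sup>2 + \<sigma>n\<^sup>2"
  have G0pos: "G0 > 0" unfolding G0_def using pos by (simp add: add_nonneg_pos)
  have gl: "\<And>l. g l = l * C\<^sup>2 + G0" unfolding g_def G0_def C_def by simp
  have gpos: "\<And>l. l \<ge> 0 \<Longrightarrow> g l > 0" unfolding gl using G0pos by (simp add: add_nonneg_pos)
  define K where "K = \<sigma>n\<^sup>2 * (T\<^sup>2 + 1)"
  have MSEf: "MSE l = \<delta>\<^sup>2 * G0 / (g l)\<^sup>2 - 2 * \<sigma>n\<^sup>2 * \<delta> * T / g l + K" if l: "l \<ge> 0" for l
  proof -
    define x where "x = - (C * ((\<sigma>1\<^sup>2 + l) * S + c1)) / ((\<sigma>1\<^sup>2 + l) * C\<^sup>2 + \<sigma>n\<^sup>2)"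
    have gg: "(\<sigma>1\<^sup>2 + l) * C\<^sup>2 + \<sigma>n\<^sup>2 = g l" unfolding gl G0_def by (simp add: algebra_simps)
    have m: "MSE l = \<sigma>1\<^sup>2 * (x*C+S)\<^sup>2 + \<sigma>n\<^sup>2*(x\<^sup>2+1)"
      using W l unfolding MSE_def MSE_RZF_def
      by (simp add: h0_def h1_def x_def C_def S_def J_form)
    define y where "y = \<delta> / g l"
    have gne: "g l \<noteq> 0" using gpos[OF l] by simp
    have dd: "\<delta> = \<sigma>n\<^sup>2 * S / C - c1 * C" unfolding \<delta>_def C_def S_def by (simp add: tan_def)
    have k: "\<delta> - S/C * g l = -(C*((\<sigma>1\<^sup>2+l)*S + c1))" unfolding dd gg[symmetric]
      using Cpos by (simp add: field_simps power2_eq_square)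
    have "x = (\<delta> - S/C * g l) / g l" unfolding k x_def gg ..
    also have "\<dots> = y - T" unfolding y_def TSC using gne by (simp add: diff_divide_distrib)
    finally have xy: "x = y - T" .
    have xc: "x*C + S = y*C" unfolding xy TSC using Cpos by (simp add: field_simps)
    have m2: "MSE l = \<sigma>1\<^sup>2 * (y*C)\<^sup>2 + \<sigma>n\<^sup>2*((y-T)\<^sup>2+1)" using m xc xy by simp
    have "MSE l = y\<^sup>2 * G0 - 2 * \<sigma>n\<^sup>2 * T * y + K" unfolding m2 K_def G0_def
      by (simp add: algebra_simps power2_eq_square)
    also have "\<dots> = \<delta>\<^sup>2 * G0 / (g l)\<^sup>2 - 2 * \<sigma>n\<^sup>2 * \<delta> * T / g l + K"
      unfolding y_def by (simp add: power_divide)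
    finally show ?thesis .
  qed
  have P2: "\<forall>l\<ge>0. g l > 0 \<and>
        MSE l = \<delta>\<^sup>2 * (\<sigma>1\<^sup>2 * (cos \<tau>)\<^sup>2 + \<sigma>n\<^sup>2) / (g l)\<^sup>2
                - 2 * \<sigma>n\<^sup>2 * \<delta> * tan \<tau> / g l + \<sigma>n\<^sup>2 * ((tan \<tau>)\<^sup>2 + 1)"
    using gpos MSEf unfolding G0_def C_def T_def K_def by simp
  have P3: "\<delta> = 0 \<longrightarrow> (\<forall>l\<ge>0. MSE l = \<sigma>n\<^sup>2 * ((tan \<tau>)\<^sup>2 + 1))"
    using MSEf unfolding K_def T_def by simp
  define F where "F = (\<lambda>t. \<delta>\<^sup>2*G0*t\<^sup>2 - 2*\<gamma>*\<delta>\<^sup>2*t)"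
  have MSEF: "MSE l = F (1 / g l) + K" if "l \<ge> 0" "\<delta> \<noteq> 0" for l
  proof -
    have "\<sigma>n\<^sup>2 * T = \<gamma> * \<delta>" unfolding \<gamma>_def T_def using that by simp
    hence "2 * \<sigma>n\<^sup>2 * \<delta> * T / g l = 2*\<gamma>*\<delta>\<^sup>2*(1/g l)"
      by (simp add: power2_eq_square algebra_simps)
    thus ?thesis using MSEf[OF that(1)] unfolding F_def by (simp add: power_divide)
  qed
  have gmono: "\<And>a b. 0 \<le> a \<Longrightarrow> a < b \<Longrightarrow> g a < g b" unfolding gl using Cpos by simp
  have P4: "\<delta> \<noteq> 0 \<and> \<gamma> \<le> 0 \<longrightarrow>
        (\<forall>a b. 0 \<le> a \<and> a < b \<longrightarrow> MSE b < MSE a)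
        \<and> (\<exists>L. (MSE \<longlongrightarrow> L) at_top \<and> (INF l\<in>{0..}. MSE l) = L)"
  proof (intro impI conjI)
    assume H: "\<delta> \<noteq> 0 \<and> \<gamma> \<le> 0"
    show "\<forall>a b. 0 \<le> a \<and> a < b \<longrightarrow> MSE b < MSE a"
    proof (intro allI impI)
      fix a b :: real
      assume ab: "0 \<le> a \<and> a < b"
      have "1 / g b < 1 / g a" using gmono[of a b] gpos[of a] ab
        by (simp add: divide_strict_left_mono)
      moreover have "0 < 1 / g b" using gpos[of b] ab by simp
      ultimately have "F (1 / g b) < F (1 / g a)" unfolding F_def
        using quad_mono[of \<delta> G0 \<gamma>] H G0pos by blast
      thus "MSE b < MSE a" using MSEF[of a] MSEF[of b] ab H by simp
    qed
    have low: "K \<le> MSE l" if "l \<ge> 0" for l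
      using MSEF[OF that] H quad_low[OF G0pos, of \<gamma> "1 / g l" \<delta>] gpos[OF that] unfolding F_def by simp
    have gtop: "filterlim g at_top at_top"
    proof -
      have "filterlim (\<lambda>l. G0 + l * C\<^sup>2) at_top at_top"
        by (rule filterlim_tendsto_add_at_top[OF tendsto_const filterlim_at_top_mult_tendsto_pos[OF tendsto_const _ filterlim_ident]])
          (use Cpos in simp)
      thus ?thesis unfolding gl by (simp add: add.commute)
    qed
    have "((\<lambda>l. F (inverse (g l)) + K) \<longlongrightarrow> F 0 + K) at_top"
      unfolding F_def by (intro tendsto_intros tendsto_inverse_0_at_top[OF gtop])
    hence lim0: "((\<lambda>l. F (inverse (g l)) + K) \<longlongrightarrow> K) at_top" by (simp add: F_def)
    have ev: "\<forall>\<^sub>F l in at_top. F (inverse (g l)) + K = MSE l"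
      using eventually_ge_at_top[of "0::real"] by eventually_elim (use MSEF H in \<open>simp add: inverse_eq_divide\<close>)
    have lim: "(MSE \<longlongrightarrow> K) at_top" by (rule Lim_transform_eventually[OF lim0 ev])
    have bdd: "bdd_below (MSE ` {0..})" using low by (intro bdd_belowI2) auto
    have "(INF l\<in>{0..}. MSE l) = K"
    proof (rule antisym)
      show "K \<le> (INF l\<in>{0..}. MSE l)" by (rule cINF_greatest) (use low in auto)
      show "(INF l\<in>{0..}. MSE l) \<le> K"
        by (rule tendsto_lowerbound[OF lim]) (use eventually_ge_at_top[of "0::real"] in \<open>eventually_elim, auto intro!: cINF_lower[OF bdd]\<close>)
    qed
    with lim show "\<exists>L. (MSE \<longlongrightarrow> L) at_top \<and> (INF l\<in>{0..}. MSE l) = L" by blast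
  qed
  have P5: "\<delta> \<noteq> 0 \<and> 0 < \<gamma> \<and> \<gamma> < 1 \<longrightarrow>
        (let ls = - (c1 * (\<sigma>1\<^sup>2 * (cos \<tau>)\<^sup>2 + \<sigma>n\<^sup>2)) / (\<sigma>n\<^sup>2 * sin \<tau>)
         in ls > 0 \<and> (\<forall>l\<ge>0. MSE ls \<le> MSE l))"
  proof (intro impI)
    assume H: "\<delta> \<noteq> 0 \<and> 0 < \<gamma> \<and> \<gamma> < 1"
    define ls where "ls = - (c1 * G0) / (\<sigma>n\<^sup>2 * S)"
    have Tne: "T \<noteq> 0" using H unfolding \<gamma>_def T_def by auto
    hence Sne: "S \<noteq> 0" unfolding TSC by simp
    have "\<gamma> = \<sigma>n\<^sup>2 * T / \<delta>" unfolding \<gamma>_def T_def ..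
    have gls: "g ls = G0 / \<gamma>"
      unfolding gl ls_def \<gamma>_def \<delta>_def T_def[symmetric] C_def[symmetric] TSC
      using Sne Cpos pos H \<gamma>_def \<delta>_def T_def TSC C_def
      by (simp add: field_simps power2_eq_square)
    have "G0 / \<gamma> > G0" using H G0pos by (simp add: field_simps)
    hence lsp: "ls > 0" using gls unfolding gl using Cpos by (smt (verit) mult_nonpos_nonneg zero_le_power2)
    have "MSE ls \<le> MSE l" if "l \<ge> 0" for l
    proof -
      have "F (\<gamma> / G0) \<le> F (1 / g l)" unfolding F_def by (rule quad_min[OF G0pos])
      moreover have "1 / g ls = \<gamma> / G0" unfolding gls by simp
      ultimately show ?thesis using MSEF[of ls] MSEF[OF that] lsp H by simp
    qed
    thus "let ls = - (c1 * (\<sigma>1\<^sup>2 * (cos \<tau>)\<^sup>2 + \<sigma>n\<^sup>2)) / (\<sigma>n\<^sup>2 * sin \<tau>)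
         in ls > 0 \<and> (\<forall>l\<ge>0. MSE ls \<le> MSE l)"
      using lsp unfolding Let_def ls_def G0_def C_def S_def by simp
  qed
  have P6: "\<delta> \<noteq> 0 \<and> 1 \<le> \<gamma> \<longrightarrow> (\<forall>l\<ge>0. MSE 0 \<le> MSE l)"
  proof (intro impI allI)
    fix l :: real
    assume H: "\<delta> \<noteq> 0 \<and> 1 \<le> \<gamma>"
    show "MSE 0 \<le> MSE l" if "l \<ge> 0"
    proof -
      have g0: "g 0 = G0" unfolding gl by simp
      have "1 / g l \<le> 1 / G0" using gmono[of 0 l] that g0 G0pos
        by (cases "l = 0") (simp_all add: frac_le)
      moreover have "0 < 1 / g l" using gpos[OF that] by simp
      ultimately have "F (1/G0) \<le> F (1 / g l)" unfolding F_def using quad_end[OF G0pos] H by blast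
      thus ?thesis using MSEF[of 0] MSEF[OF that] H g0 by simp
    qed
  qed
  show ?thesis using W P2 P3 P4 P5 P6 by blast
qed

end
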